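(* Let $R$ be an affine algebra over a field $K$ with no zero divisors which is not amenable. Then there exists a finite-dimensional $K$-subspace $Z\subseteq R$ such that for every nonzero finite-dimensional $K$-subspace $V\subseteq R$, $$\frac{\dim_K(VZ)}{\dim_K(V)}>2.$$
   Context: An affine algebra is a finitely generated associative algebra over $K$, not necessarily unital. For subspaces $V,Z$, $VZ$ denotes the $K$-span of all products $vz$, $v\in V$, $z\in Z$. $R$ is amenable if there exist finite-dimensional $K$-subspaces $W_1\subseteq W_2\subseteq\cdots$ with $\bigcup_nW_n=R$ such that for every $r\in R$, $\lim_{n\to\infty}\dim_K(W_nr+W_n)/\dim_K(W_n)=1$. *)

theory Defs
  imports Complex_Main
begin

text \<open>Setting: the algebra R is the whole carrier of a type 'a of class ring
(associative, not necessarily unital), which is a K-vector space via scale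
(K a type of class field), with K-bilinear multiplication.\<close>

definition alg_bilinear :: "('k::field \<Rightarrow> 'a::ring \<Rightarrow> 'a) \<Rightarrow> bool" where
  "alg_bilinear scale \<longleftrightarrow>
     (\<forall>c x y. scale c (x * y) = scale c x * y \<and> scale c (x * y) = x * scale c y)"

definition K_algebra :: "('k::field \<Rightarrow> 'a::ring \<Rightarrow> 'a) \<Rightarrow> bool" where
  "K_algebra scale \<longleftrightarrow> vector_space scale \<and> alg_bilinear scale"

definition fd_subspace :: "('k::field \<Rightarrow> 'a::ring \<Rightarrow> 'a) \<Rightarrow> 'a set \<Rightarrow> bool" where
  "fd_subspace scale V \<longleftrightarrow>
     module.subspace scale V \<and> (\<exists>B. finite B \<and> module.span scale B = V)"

definition subspace_prod :: "('k::field \<Rightarrow> 'a::ring \<Rightarrow> 'a) \<Rightarrow> 'a set \<Rightarrow> 'a set \<Rightarrow> 'a set" where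
  "subspace_prod scale V Z = module.span scale {v * z | v z. v \<in> V \<and> z \<in> Z}"

definition gen_subalgebra :: "('k::field \<Rightarrow> 'a::ring \<Rightarrow> 'a) \<Rightarrow> 'a set \<Rightarrow> 'a set" where
  "gen_subalgebra scale G =
     \<Inter>{S. module.subspace scale S \<and> G \<subseteq> S \<and> (\<forall>x\<in>S. \<forall>y\<in>S. x * y \<in> S)}"

definition affine_algebra :: "('k::field \<Rightarrow> 'a::ring \<Rightarrow> 'a) \<Rightarrow> bool" where
  "affine_algebra scale \<longleftrightarrow> K_algebra scale \<and>
     (\<exists>G. finite G \<and> gen_subalgebra scale G = UNIV)"

definition no_zero_divisors_alg :: "'a::ring itself \<Rightarrow> bool" where
  "no_zero_divisors_alg _ \<longleftrightarrow> (\<forall>x y::'a. x * y = 0 \<longrightarrow> x = 0 \<or> y = 0)"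

definition amenable_alg :: "('k::field \<Rightarrow> 'a::ring \<Rightarrow> 'a) \<Rightarrow> bool" where
  "amenable_alg scale \<longleftrightarrow>
     (\<exists>W :: nat \<Rightarrow> 'a set.
        (\<forall>n. fd_subspace scale (W n)) \<and> incseq W \<and> (\<Union>n. W n) = UNIV \<and>
        (\<forall>r. (\<lambda>n. real (vector_space.dim scale (module.span scale ((\<lambda>w. w * r) ` W n \<union> W n)))
                  / real (vector_space.dim scale (W n))) \<longlonglongrightarrow> 1))"

end

theory Submission
  imports Defs
begin


locale kalg = vector_space scale for scale :: "'k::field \<Rightarrow> 'a::ring \<Rightarrow> 'a" +
  assumes bil1: "scale c (x * y) = scale c x * y" and bil2: "scale c (x * y) = x * scale c y"
begin

lemma hom_right: "module_hom scale scale (\<lambda>u. u * x)"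
  by unfold_locales (simp_all add: distrib_right bil1)

lemma hom_left: "module_hom scale scale (\<lambda>u. x * u)"
  by unfold_locales (simp_all add: distrib_left bil2)

lemma L1r: assumes "y \<in> span S" shows "y * b \<in> span ((\<lambda>s. s * b) ` S)"
proof -
  interpret h: module_hom scale scale "\<lambda>u. u * b" by (rule hom_right)
  show ?thesis using assms h.span_image by auto
qed

lemma L1l: assumes "y \<in> span S" shows "a * y \<in> span ((\<lambda>s. a * s) ` S)"
proof -
  interpret h: module_hom scale scale "\<lambda>u. a * u" by (rule hom_left)
  show ?thesis using assms h.span_image by auto
qed

lemma L2: assumes "x \<in> span A" "y \<in> span B"
  shows "x * y \<in> span {a * b | a b. a \<in> A \<and> b \<in> B}"
proof -
  have "x * y \<in> span ((\<lambda>s. s * y) ` A)" using L1r[OF assms(1)] .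
  moreover have "(\<lambda>s. s * y) ` A \<subseteq> span {a * b | a b. a \<in> A \<and> b \<in> B}"
  proof
    fix t assume "t \<in> (\<lambda>s. s * y) ` A"
    then obtain s where s: "s \<in> A" "t = s * y" by auto
    have "s * y \<in> span ((\<lambda>u. s * u) ` B)" using L1l[OF assms(2)] .
    also have "\<dots> \<subseteq> span {a * b | a b. a \<in> A \<and> b \<in> B}"
      by (rule span_mono) (use s in auto)
    finally show "t \<in> span {a * b | a b. a \<in> A \<and> b \<in> B}" using s by simp
  qed
  ultimately show ?thesis using span_minimal[OF _ subspace_span] by blast
qed

lemma L3l: "span {y * b | y b. y \<in> span S \<and> b \<in> B} = span {s * b | s b. s \<in> S \<and> b \<in> B}"
proof (rule span_eq[THEN iffD2], rule conjI)
  show "{y * b | y b. y \<in> span S \<and> b \<in> B} \<subseteq> span {s * b | s b. s \<in> S \<and> b \<in> B}"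
    using L2[of _ S _ B] span_superset by blast
  show "{s * b | s b. s \<in> S \<and> b \<in> B} \<subseteq> span {y * b | y b. y \<in> span S \<and> b \<in> B}"
    using span_superset[of S] span_superset[of "{y * b | y b. y \<in> span S \<and> b \<in> B}"] by blast
qed

lemma L3r: "span {a * y | a y. a \<in> A \<and> y \<in> span S} = span {a * s | a s. a \<in> A \<and> s \<in> S}"
proof (rule span_eq[THEN iffD2], rule conjI)
  show "{a * y | a y. a \<in> A \<and> y \<in> span S} \<subseteq> span {a * s | a s. a \<in> A \<and> s \<in> S}"
    using L2[of _ A _ S] span_superset by blast
  show "{a * s | a s. a \<in> A \<and> s \<in> S} \<subseteq> span {a * y | a y. a \<in> A \<and> y \<in> span S}"
    using span_superset[of S] span_superset[of "{a * y | a y. a \<in> A \<and> y \<in> span S}"] by blast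
qed

lemma assoc_prod: "subspace_prod scale (subspace_prod scale V A) B = subspace_prod scale V (subspace_prod scale A B)"
proof -
  have "subspace_prod scale (subspace_prod scale V A) B = span {p * b | p b. p \<in> {v * a | v a. v \<in> V \<and> a \<in> A} \<and> b \<in> B}"
    unfolding subspace_prod_def by (rule L3l)
  also have "{p * b | p b. p \<in> {v * a | v a. v \<in> V \<and> a \<in> A} \<and> b \<in> B} = {v * q | v q. v \<in> V \<and> q \<in> {a * b | a b. a \<in> A \<and> b \<in> B}}"
    by (auto simp: mult.assoc) (metis mult.assoc)+
  also have "span \<dots> = subspace_prod scale V (subspace_prod scale A B)"
    unfolding subspace_prod_def by (rule L3r[symmetric])
  finally show ?thesis .
qed

end


context kalg begin

definition fdim :: "'a set \<Rightarrow> bool" where "fdim S \<longleftrightarrow> (\<exists>B. finite B \<and> S \<subseteq> span B)"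

lemma fdim_span_finite: "finite B \<Longrightarrow> fdim (span B)"
  unfolding fdim_def by auto

lemma fdim_span: "fdim S \<Longrightarrow> fdim (span S)"
  unfolding fdim_def by (metis span_minimal subspace_span)

lemma fdim_Un: "fdim S \<Longrightarrow> fdim T \<Longrightarrow> fdim (S \<union> T)"
  unfolding fdim_def
proof (elim exE conjE)
  fix B C assume "finite B" "S \<subseteq> span B" "finite C" "T \<subseteq> span C"
  then show "\<exists>B. finite B \<and> S \<union> T \<subseteq> span B"
  proof (intro exI[of _ "B \<union> C"] conjI)
    show "finite (B \<union> C)" using \<open>finite B\<close> \<open>finite C\<close> by simp
    show "S \<union> T \<subseteq> span (B \<union> C)"
      using \<open>S \<subseteq> span B\<close> \<open>T \<subseteq> span C\<close> span_mono[of B "B \<union> C"] span_mono[of C "B \<union> C"] by blast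
  qed
qed

lemma fdim_subset: "S \<subseteq> T \<Longrightarrow> fdim T \<Longrightarrow> fdim S"
  unfolding fdim_def by blast

lemma fdim_right: "fdim S \<Longrightarrow> fdim ((\<lambda>w. w * r) ` S)"
  unfolding fdim_def
proof (elim exE conjE)
  fix B assume B: "finite B" "S \<subseteq> span B"
  then show "\<exists>B. finite B \<and> (\<lambda>w. w * r) ` S \<subseteq> span B"
    by (intro exI[of _ "(\<lambda>w. w * r) ` B"]) (auto intro: L1r)
qed

lemma fdim_prod: "fdim V \<Longrightarrow> fdim Z \<Longrightarrow> fdim {v * z | v z. v \<in> V \<and> z \<in> Z}"
  unfolding fdim_def
proof (elim exE conjE)
  fix B C assume B: "finite B" "V \<subseteq> span B" "finite C" "Z \<subseteq> span C"
  have fin: "finite {a * b | a b. a \<in> B \<and> b \<in> C}"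
  proof -
    have "{a * b | a b. a \<in> B \<and> b \<in> C} = (\<lambda>(a,b). a * b) ` (B \<times> C)" by auto
    then show ?thesis using B by simp
  qed
  show "\<exists>B. finite B \<and> {v * z | v z. v \<in> V \<and> z \<in> Z} \<subseteq> span B"
    using B fin by (intro exI[of _ "{a * b | a b. a \<in> B \<and> b \<in> C}"]) (auto intro!: L2)
qed

lemma fds_fdim: "fd_subspace scale V \<Longrightarrow> fdim V"
  unfolding fd_subspace_def fdim_def by auto

lemma D1: assumes "independent C" "C \<subseteq> W" "fdim W" shows "finite C \<and> card C \<le> dim W"
proof -
  obtain B where B: "finite B" "W \<subseteq> span B" using assms(3) fdim_def by auto
  obtain D where D: "D \<subseteq> W" "independent D" "W \<subseteq> span D" "card D = dim W" by (rule basis_exists)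
  have fD: "finite D" using independent_span_bound[OF B(1) D(2)] D(1) B(2) by auto
  show ?thesis using independent_span_bound[OF fD assms(1)] assms(2) D by auto
qed

lemma D2: assumes "S \<subseteq> T" "fdim T" shows "dim S \<le> dim T"
proof -
  obtain C where C: "C \<subseteq> S" "independent C" "S \<subseteq> span C" "card C = dim S" by (rule basis_exists)
  show ?thesis using D1[OF C(2) _ assms(2)] C assms(1) by auto
qed

lemma D3: assumes "subspace S" "S \<subseteq> T" "fdim T" "dim T \<le> dim S" shows "S = T"
proof (rule ccontr)
  assume "S \<noteq> T"
  then obtain t where t: "t \<in> T" "t \<notin> S" using assms(2) by auto
  obtain C where C: "C \<subseteq> S" "independent C" "S \<subseteq> span C" "card C = dim S" by (rule basis_exists)
  have "span C \<subseteq> S" using C(1) assms(1) span_minimal by auto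
  then have tn: "t \<notin> span C" using t by auto
  have ind: "independent (insert t C)" using independent_insertI[OF tn C(2)] .
  have "finite (insert t C) \<and> card (insert t C) \<le> dim T"
    using D1[OF ind _ assms(3)] C(1) assms(2) t(1) by auto
  moreover have "t \<notin> C" using tn span_superset by auto
  ultimately show False using C(4) assms(4) by (auto simp: card_insert_if)
qed

lemma basis_fin: assumes "fdim S"
  obtains C where "finite C" "C \<subseteq> S" "independent C" "S \<subseteq> span C" "card C = dim S"
proof -
  obtain C where C: "C \<subseteq> S" "independent C" "S \<subseteq> span C" "card C = dim S" by (rule basis_exists)
  then show ?thesis using D1[OF C(2) C(1) assms] that by auto
qed

lemma D4: assumes "fdim S" "fdim T" shows "dim (S \<union> T) \<le> dim S + dim T"
proof -
  obtain C where C: "finite C" "C \<subseteq> S" "independent C" "S \<subseteq> span C" "card C = dim S" using basis_fin[OF assms(1)] .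
  obtain D where D: "finite D" "D \<subseteq> T" "independent D" "T \<subseteq> span D" "card D = dim T" using basis_fin[OF assms(2)] .
  have "S \<union> T \<subseteq> span (C \<union> D)" using C D span_mono[of C "C \<union> D"] span_mono[of D "C \<union> D"] by auto
  then have "dim (S \<union> T) \<le> card (C \<union> D)" using dim_le_card C D by auto
  also have "\<dots> \<le> card C + card D" by (rule card_Un_le)
  finally show ?thesis using C D by simp
qed

lemma D5: assumes "fdim S" shows "dim ((\<lambda>w. w * r) ` S) \<le> dim S"
proof -
  obtain C where C: "finite C" "C \<subseteq> S" "independent C" "S \<subseteq> span C" "card C = dim S" using basis_fin[OF assms(1)] .
  have "(\<lambda>w. w * r) ` S \<subseteq> span ((\<lambda>w. w * r) ` C)" using C(4) L1r by blast
  then have "dim ((\<lambda>w. w * r) ` S) \<le> card ((\<lambda>w. w * r) ` C)" using dim_le_card C by auto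
  also have "\<dots> \<le> card C" using C(1) card_image_le by blast
  finally show ?thesis using C by simp
qed

lemma D6: assumes "fdim S" "inj f" "module_hom scale scale f" shows "dim S \<le> dim (f ` S)"
proof -
  interpret h: module_hom scale scale f by fact
  obtain C where C: "finite C" "C \<subseteq> S" "independent C" "S \<subseteq> span C" "card C = dim S" using basis_fin[OF assms(1)] .
  have ind: "independent (f ` C)" using h.independent_injective_image[OF C(3)] assms(2) inj_on_subset by blast
  have "fdim (f ` S)"
  proof -
    have "f ` S \<subseteq> span (f ` C)" using C(4) h.span_image by auto
    then show ?thesis unfolding fdim_def using C(1) by blast
  qed
  then have "card (f ` C) \<le> dim (f ` S)" using D1[OF ind] C(2) by auto
  moreover have "card (f ` C) = card C" using assms(2) card_image inj_on_subset by blast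
  ultimately show ?thesis using C by simp
qed

lemma fdim_fds: assumes "fdim S" shows "fd_subspace scale (span S)"
proof -
  have f2: "fdim (span S)" using fdim_span[OF assms] .
  obtain C where C: "finite C" "C \<subseteq> span S" "independent C" "span S \<subseteq> span C" "card C = dim (span S)" using basis_fin[OF f2] .
  have "span C \<subseteq> span S" by (rule span_minimal[OF C(2) subspace_span])
  then have "span C = span S" using C(4) by auto
  then show ?thesis unfolding fd_subspace_def using C(1) by auto
qed

lemma fds_span: "fd_subspace scale V \<Longrightarrow> span V = V"
  unfolding fd_subspace_def by (auto simp: span_eq_iff)

lemma dim_pos: assumes "fd_subspace scale V" "V \<noteq> {0}" shows "dim V > 0"
proof (rule ccontr)
  assume "\<not> dim V > 0"
  then have d: "dim V = 0" by simp
  obtain C where C: "finite C" "C \<subseteq> V" "independent C" "V \<subseteq> span C" "card C = dim V"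
    using basis_fin[OF fds_fdim[OF assms(1)]] .
  then have "C = {}" using d by simp
  then have "V \<subseteq> {0}" using C by simp
  moreover have "0 \<in> V" using assms(1) unfolding fd_subspace_def by (simp add: subspace_0)
  ultimately show False using assms(2) by auto
qed

lemma fds_prod: "fd_subspace scale V \<Longrightarrow> fd_subspace scale Z \<Longrightarrow> fd_subspace scale (subspace_prod scale V Z)"
  unfolding subspace_prod_def by (intro fdim_fds fdim_prod fds_fdim)

end


context kalg begin

lemma dim0: "dim {0} = 0"
  by (metis dim_span span_empty dim_eq_card_independent independent_empty card.empty)

definition fol :: "'a set \<Rightarrow> 'a set \<Rightarrow> 'a set" where
  "fol V Z = span ({v * z | v z. v \<in> V \<and> z \<in> Z} \<union> V)"

lemma inj_right: assumes nzd: "\<forall>x y::'a. x * y = 0 \<longrightarrow> x = 0 \<or> y = 0" and "(x::'a) \<noteq> 0"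
  shows "inj (\<lambda>v. v * x)"
proof (rule injI)
  fix v w assume "v * x = w * x"
  then have "(v - w) * x = 0" by (simp add: left_diff_distrib)
  then have "v - w = 0" using nzd assms(2) by blast
  then show "v = w" by simp
qed

lemma amp1:
  assumes nzd: "\<forall>x y::'a. x * y = 0 \<longrightarrow> x = 0 \<or> y = 0" and x: "x \<noteq> (0::'a)"
    and Z: "fd_subspace scale Z" and c: "c > 0"
    and F: "\<forall>V. fd_subspace scale V \<and> V \<noteq> {0} \<longrightarrow> real (dim (fol V Z)) \<ge> c * real (dim V)"
  shows "\<exists>Z'. fd_subspace scale Z' \<and> (\<forall>V. fd_subspace scale V \<and> V \<noteq> {0} \<longrightarrow>
            real (dim (subspace_prod scale V Z')) \<ge> c * real (dim V))"
proof -
  define Z' where "Z' = span ({x * z | z. z \<in> Z} \<union> {x})"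
  have "fdim ({x * z | z. z \<in> Z} \<union> {x})"
  proof (rule fdim_Un)
    have "{x * z | z. z \<in> Z} \<subseteq> {v * z | v z. v \<in> span {x} \<and> z \<in> Z}" using span_superset by blast
    then show "fdim {x * z | z. z \<in> Z}"
      using fdim_prod[OF fdim_span_finite[of "{x}"] fds_fdim[OF Z]] fdim_subset by blast
    show "fdim {x}" using fdim_span_finite[of "{x}"] span_superset fdim_subset by blast
  qed
  then have Z'fd: "fd_subspace scale Z'" unfolding Z'_def by (rule fdim_fds)
  have "\<forall>V. fd_subspace scale V \<and> V \<noteq> {0} \<longrightarrow> real (dim (subspace_prod scale V Z')) \<ge> c * real (dim V)"
  proof (intro allI impI, elim conjE)
    fix V assume V: "fd_subspace scale V" "V \<noteq> {0}"
    interpret h: module_hom scale scale "\<lambda>u. u * x" by (rule hom_right)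
    define U where "U = (\<lambda>v. v * x) ` V"
    have Vsub: "subspace V" using V unfolding fd_subspace_def by auto
    have Usub: "subspace U" unfolding U_def using h.subspace_image[OF Vsub] .
    have Ufdim: "fdim U" unfolding U_def using fdim_right[OF fds_fdim[OF V(1)]] .
    have "span U = U" using Usub span_eq_iff by blast
    then have Ufd: "fd_subspace scale U" using fdim_fds[OF Ufdim] by (simp only: \<open>span U = U\<close>)
    obtain v where v: "v \<in> V" "v \<noteq> 0" using V(2) Vsub subspace_0 by auto
    have "v * x \<noteq> 0" using nzd v x by auto
    then have U0: "U \<noteq> {0}" using v unfolding U_def by auto
    have dUV: "dim V \<le> dim U" unfolding U_def
      using D6[OF fds_fdim[OF V(1)] inj_right[OF nzd x] hom_right] .
    have "subspace_prod scale V Z' = span {v * s | v s. v \<in> V \<and> s \<in> {x * z | z. z \<in> Z} \<union> {x}}"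
      unfolding subspace_prod_def Z'_def by (rule L3r)
    also have "{v * s | v s. v \<in> V \<and> s \<in> {x * z | z. z \<in> Z} \<union> {x}} = {u * z | u z. u \<in> U \<and> z \<in> Z} \<union> U"
    proof
      show "{v * s | v s. v \<in> V \<and> s \<in> {x * z | z. z \<in> Z} \<union> {x}} \<subseteq> {u * z | u z. u \<in> U \<and> z \<in> Z} \<union> U"
      proof
        fix w assume "w \<in> {v * s | v s. v \<in> V \<and> s \<in> {x * z | z. z \<in> Z} \<union> {x}}"
        then obtain v s where vs: "w = v * s" "v \<in> V" "s \<in> {x * z | z. z \<in> Z} \<union> {x}" by blast
        show "w \<in> {u * z | u z. u \<in> U \<and> z \<in> Z} \<union> U"
        proof (cases "s = x")
          case True then show ?thesis using vs unfolding U_def by blast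
        next
          case False
          then obtain z where z: "s = x * z" "z \<in> Z" using vs(3) by blast
          have "w = (v * x) * z" using vs(1) z(1) by (simp add: mult.assoc)
          moreover have "v * x \<in> U" unfolding U_def using vs(2) by blast
          ultimately show ?thesis using z(2) by blast
        qed
      qed
      show "{u * z | u z. u \<in> U \<and> z \<in> Z} \<union> U \<subseteq> {v * s | v s. v \<in> V \<and> s \<in> {x * z | z. z \<in> Z} \<union> {x}}"
      proof
        fix w assume "w \<in> {u * z | u z. u \<in> U \<and> z \<in> Z} \<union> U"
        then consider (a) u z where "w = u * z" "u \<in> U" "z \<in> Z" | (b) "w \<in> U" by blast
        then show "w \<in> {v * s | v s. v \<in> V \<and> s \<in> {x * z | z. z \<in> Z} \<union> {x}}"
        proof cases
          case a
          then obtain v where v: "v \<in> V" "u = v * x" unfolding U_def by blast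
          have "w = v * (x * z)" using a v by (simp add: mult.assoc)
          then show ?thesis using v(1) a(3) by blast
        next
          case b
          then obtain v where v: "v \<in> V" "w = v * x" unfolding U_def by blast
          then show ?thesis by blast
        qed
      qed
    qed
    finally have eq: "subspace_prod scale V Z' = fol U Z" unfolding fol_def .
    have "c * real (dim V) \<le> c * real (dim U)" using dUV c by simp
    also have "\<dots> \<le> real (dim (fol U Z))" using F Ufd U0 by auto
    finally show "c * real (dim V) \<le> real (dim (subspace_prod scale V Z'))" using eq by simp
  qed
  then show ?thesis using Z'fd by blast
qed

lemma amp2:
  assumes Z: "fd_subspace scale Z" and c: "c > 1"
    and F: "\<forall>V. fd_subspace scale V \<and> V \<noteq> {0} \<longrightarrow> real (dim (subspace_prod scale V Z)) \<ge> c * real (dim V)"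
  shows "\<exists>Z'. fd_subspace scale Z' \<and> (\<forall>V. fd_subspace scale V \<and> V \<noteq> {0} \<longrightarrow>
            real (dim (subspace_prod scale V Z')) / real (dim V) > 2)"
proof -
  define Zp where "Zp = rec_nat Z (\<lambda>_ W. subspace_prod scale W Z)"
  have Zp0: "Zp 0 = Z" and ZpS: "\<And>k. Zp (Suc k) = subspace_prod scale (Zp k) Z" by (simp_all add: Zp_def)
  have fdk: "fd_subspace scale (Zp k)" for k
    by (induction k) (simp_all add: Zp0 ZpS Z fds_prod)
  have main: "\<forall>V. fd_subspace scale V \<and> V \<noteq> {0} \<longrightarrow> real (dim (subspace_prod scale V (Zp k))) \<ge> c ^ Suc k * real (dim V)" for k
  proof (induction k)
    case 0 then show ?case using F by (simp add: Zp0)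
  next
    case (Suc k)
    show ?case
    proof (intro allI impI, elim conjE)
      fix V assume V: "fd_subspace scale V" "V \<noteq> {0}"
      define V' where "V' = subspace_prod scale V (Zp k)"
      have V'fd: "fd_subspace scale V'" unfolding V'_def using fds_prod[OF V(1) fdk] .
      have IH: "real (dim V') \<ge> c ^ Suc k * real (dim V)" using Suc V unfolding V'_def by auto
      have "dim V > 0" using dim_pos[OF V] .
      then have "c ^ Suc k * real (dim V) > 0" using c by simp
      then have "dim V' > 0" using IH by linarith
      then have V'0: "V' \<noteq> {0}" using dim0 by auto
      have eq: "subspace_prod scale V (Zp (Suc k)) = subspace_prod scale V' Z"
        unfolding V'_def ZpS by (rule assoc_prod[symmetric])
      have "c ^ Suc (Suc k) * real (dim V) = c * (c ^ Suc k * real (dim V))" by simp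
      also have "\<dots> \<le> c * real (dim V')" using IH c by simp
      also have "\<dots> \<le> real (dim (subspace_prod scale V' Z))" using F V'fd V'0 by auto
      finally show "c ^ Suc (Suc k) * real (dim V) \<le> real (dim (subspace_prod scale V (Zp (Suc k))))"
        using eq by simp
    qed
  qed
  obtain k where k: "c ^ k > 2" using real_arch_pow[OF c] by auto
  have "c ^ k * 1 < c ^ k * c" by (rule mult_strict_left_mono) (use c k in auto)
  moreover have "c ^ Suc k = c ^ k * c" by (rule power_Suc2)
  ultimately have "c ^ Suc k > 2" using k by linarith
  show ?thesis
  proof (intro exI[of _ "Zp k"] conjI allI impI, rule fdk, elim conjE)
    fix V assume V: "fd_subspace scale V" "V \<noteq> {0}"
    have d: "real (dim V) > 0" using dim_pos[OF V] by simp
    have "c ^ Suc k * real (dim V) \<le> real (dim (subspace_prod scale V (Zp k)))" using main V by auto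
    then have "c ^ Suc k \<le> real (dim (subspace_prod scale V (Zp k))) / real (dim V)"
      using d by (simp add: pos_le_divide_eq)
    then show "real (dim (subspace_prod scale V (Zp k))) / real (dim V) > 2" using \<open>c ^ Suc k > 2\<close> by linarith
  qed
qed

end


primrec mons :: "'a::semigroup_mult set \<Rightarrow> nat \<Rightarrow> 'a set" where
  "mons G 0 = G"
| "mons G (Suc n) = mons G n \<union> {p * g | p g. p \<in> mons G n \<and> g \<in> G}"

lemma mons_finite: "finite G \<Longrightarrow> finite (mons G n)"
proof (induction n)
  case (Suc n)
  have "{p * g | p g. p \<in> mons G n \<and> g \<in> G} = (\<lambda>(p,g). p * g) ` (mons G n \<times> G)" by auto
  then show ?case using Suc by simp
qed simp

lemma mons_Suc_mono: "mons G n \<subseteq> mons G (Suc n)" by auto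

lemma mons_mono: "n \<le> m \<Longrightarrow> mons G n \<subseteq> mons G m"
  by (rule lift_Suc_mono_le[where f="mons G", OF mons_Suc_mono])

lemma mons_mult: "p \<in> mons G n \<Longrightarrow> q \<in> mons G m \<Longrightarrow> p * q \<in> mons G (n + m + 1)"
proof (induction m arbitrary: q)
  case 0 then show ?case by auto
next
  case (Suc m)
  from Suc.prems(2) consider "q \<in> mons G m" | q' g where "q = q' * g" "q' \<in> mons G m" "g \<in> G" by auto
  then show ?case
  proof cases
    case 1
    then have "p * q \<in> mons G (n + m + 1)" using Suc by blast
    then show ?thesis using mons_mono[of "n + m + 1" "n + Suc m + 1" G] by auto
  next
    case 2
    then have "p * q' \<in> mons G (n + m + 1)" using Suc by blast
    then have "(p * q') * g \<in> mons G (Suc (n + m + 1))" using 2 unfolding mons.simps(2) by blast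
    then show ?thesis using 2 by (simp add: mult.assoc)
  qed
qed


context kalg begin

lemma mons_span_UNIV:
  assumes "gen_subalgebra scale G = UNIV"
  shows "span (\<Union>n. mons G n) = UNIV"
proof -
  let ?M = "\<Union>n. mons G n"
  let ?S = "span ?M"
  have s: "subspace ?S" by simp
  have G: "G \<subseteq> ?S"
  proof
    fix g assume "g \<in> G"
    then have "g \<in> mons G 0" by simp
    then have "g \<in> ?M" by (rule UN_I[OF UNIV_I])
    then show "g \<in> ?S" by (rule span_base)
  qed
  have sub: "{a * b | a b. a \<in> ?M \<and> b \<in> ?M} \<subseteq> ?M"
  proof
    fix t assume "t \<in> {a * b | a b. a \<in> ?M \<and> b \<in> ?M}"
    then obtain a b n m where "t = a * b" "a \<in> mons G n" "b \<in> mons G m" by blast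
    then have "t \<in> mons G (n + m + 1)" using mons_mult by simp
    then show "t \<in> ?M" by (rule UN_I[OF UNIV_I])
  qed
  have cl: "\<forall>x\<in>?S. \<forall>y\<in>?S. x * y \<in> ?S"
  proof (intro ballI)
    fix x y assume "x \<in> ?S" "y \<in> ?S"
    then have "x * y \<in> span {a * b | a b. a \<in> ?M \<and> b \<in> ?M}" by (rule L2)
    then show "x * y \<in> ?S" using span_mono[OF sub] by (rule subsetD[rotated])
  qed
  have "?S \<in> {S. subspace S \<and> G \<subseteq> S \<and> (\<forall>x\<in>S. \<forall>y\<in>S. x * y \<in> S)}"
    using s G cl by simp
  then have "gen_subalgebra scale G \<subseteq> ?S" unfolding gen_subalgebra_def by (rule Inter_lower)
  then show ?thesis using assms by auto
qed

end


context kalg begin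

lemma span_chain: assumes "x \<in> span (\<Union>n. mons G n)" shows "\<exists>n. x \<in> span (mons G n)"
proof -
  define Q where "Q = {x. \<exists>n. x \<in> span (mons G n)}"
  have "subspace Q"
    unfolding subspace_def
  proof (intro conjI ballI allI)
    show "0 \<in> Q" unfolding Q_def using span_zero by blast
  next
    fix x y assume "x \<in> Q" "y \<in> Q"
    then obtain n m where xn: "x \<in> span (mons G n)" and ym: "y \<in> span (mons G m)" unfolding Q_def by blast
    have "span (mons G n) \<subseteq> span (mons G (max n m))" by (rule span_mono[OF mons_mono]) simp
    with xn have x': "x \<in> span (mons G (max n m))" by (rule rev_subsetD)
    have "span (mons G m) \<subseteq> span (mons G (max n m))" by (rule span_mono[OF mons_mono]) simp
    with ym have y': "y \<in> span (mons G (max n m))" by (rule rev_subsetD)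
    have "x + y \<in> span (mons G (max n m))" using x' y' by (rule span_add)
    then show "x + y \<in> Q" unfolding Q_def by blast
  next
    fix c x assume "x \<in> Q"
    then obtain n where "x \<in> span (mons G n)" unfolding Q_def by blast
    then have "scale c x \<in> span (mons G n)" by (rule span_scale)
    then show "scale c x \<in> Q" unfolding Q_def by blast
  qed
  moreover have "(\<Union>n. mons G n) \<subseteq> Q"
  proof
    fix y assume "y \<in> (\<Union>n. mons G n)"
    then obtain n where "y \<in> mons G n" by blast
    then have "y \<in> span (mons G n)" by (rule span_base)
    then show "y \<in> Q" unfolding Q_def by blast
  qed
  ultimately have "span (\<Union>n. mons G n) \<subseteq> Q" using span_minimal by simp
  then show ?thesis using assms unfolding Q_def by blast
qed

lemma inj_left: assumes nzd: "\<forall>x y::'a. x * y = 0 \<longrightarrow> x = 0 \<or> y = 0" and "(x::'a) \<noteq> 0"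
  shows "inj (\<lambda>v. x * v)"
proof (rule injI)
  fix v w assume "x * v = x * w"
  then have "x * (v - w) = 0" by (simp add: right_diff_distrib)
  then have "v - w = 0" using nzd assms(2) by blast
  then show "v = w" by simp
qed

lemma invariant_fd:
  assumes gen: "gen_subalgebra scale G = UNIV" and nzd: "\<forall>x y::'a. x * y = 0 \<longrightarrow> x = 0 \<or> y = 0"
    and V: "subspace V" "fdim V" and v: "v \<in> V" "v \<noteq> 0"
    and inv: "\<forall>w\<in>V. \<forall>g\<in>G. w * g \<in> V"
  shows "\<exists>B. finite B \<and> span B = UNIV"
proof -
  have m: "\<forall>w\<in>V. w * m \<in> V" if "m \<in> mons G n" for m n
    using that
  proof (induction n arbitrary: m)
    case 0 then show ?case using inv by simp
  next
    case (Suc n)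
    then consider "m \<in> mons G n" | q g where "m = q * g" "q \<in> mons G n" "g \<in> G" by auto
    then show ?case
    proof cases
      case 1 then show ?thesis using Suc by blast
    next
      case 2
      show ?thesis
      proof
        fix w assume "w \<in> V"
        then have "w * q \<in> V" using Suc.IH 2 by blast
        then have "(w * q) * g \<in> V" using inv 2 by blast
        then show "w * m \<in> V" using 2 by (simp add: mult.assoc)
      qed
    qed
  qed
  have all: "v * y \<in> V" for y
  proof -
    have "y \<in> span (\<Union>n. mons G n)" using mons_span_UNIV[OF gen] by simp
    then have "v * y \<in> span ((\<lambda>s. v * s) ` (\<Union>n. mons G n))" by (rule L1l)
    moreover have "(\<lambda>s. v * s) ` (\<Union>n. mons G n) \<subseteq> V" using m v(1) by blast
    ultimately show ?thesis using span_minimal[OF _ V(1)] by blast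
  qed
  interpret h: module_hom scale scale "\<lambda>u. v * u" by (rule hom_left)
  obtain C where C: "C \<subseteq> UNIV" "independent C" "UNIV \<subseteq> span C" "card C = dim (UNIV::'a set)" by (rule basis_exists)
  have injv: "inj (\<lambda>u. v * u)" using inj_left[OF nzd v(2)] .
  have ind: "independent ((\<lambda>u. v * u) ` C)"
    using h.independent_injective_image[OF C(2)] injv inj_on_subset by blast
  have "(\<lambda>u. v * u) ` C \<subseteq> V" using all by auto
  then have "finite ((\<lambda>u. v * u) ` C)" using D1[OF ind _ V(2)] by blast
  then have "finite C" using finite_imageD injv inj_on_subset by blast
  then show ?thesis using C(3) by auto
qed

end


context kalg begin

lemma fdim_fol: "fdim V \<Longrightarrow> fdim Z \<Longrightarrow> fdim (fol V Z)"
  unfolding fol_def by (intro fdim_span fdim_Un fdim_prod)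

lemma large_fol:
  assumes gen: "gen_subalgebra scale G = UNIV" and nzd: "\<forall>x y::'a. x * y = 0 \<longrightarrow> x = 0 \<or> y = 0"
    and notfd: "\<not> (\<exists>B. finite B \<and> span B = UNIV)"
    and Fol: "\<forall>Z \<epsilon>. fd_subspace scale Z \<and> \<epsilon> > 0 \<longrightarrow>
       (\<exists>V. fd_subspace scale V \<and> V \<noteq> {0} \<and> real (dim (fol V Z)) < (1 + \<epsilon>) * real (dim V))"
    and Z: "fd_subspace scale Z" "G \<subseteq> Z" and \<delta>: "\<delta> > 0"
  shows "\<exists>V. fd_subspace scale V \<and> V \<noteq> {0} \<and> real (dim (fol V Z)) \<le> (1 + \<delta>) * real (dim V) \<and> dim V \<ge> N"
proof -
  define \<epsilon> where "\<epsilon> = min \<delta> (1 / (real N + 1))"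
  have \<epsilon>0: "\<epsilon> > 0" using \<delta> by (simp add: \<epsilon>_def)
  then obtain V where V: "fd_subspace scale V" "V \<noteq> {0}" "real (dim (fol V Z)) < (1 + \<epsilon>) * real (dim V)"
    using Fol[rule_format, OF conjI[OF Z(1) \<epsilon>0]] by auto
  have "(1 + \<epsilon>) * real (dim V) \<le> (1 + \<delta>) * real (dim V)"
    by (rule mult_right_mono) (auto simp: \<epsilon>_def)
  then have le: "real (dim (fol V Z)) \<le> (1 + \<delta>) * real (dim V)" using V(3) by linarith
  have "dim V \<ge> N"
  proof (rule ccontr)
    assume "\<not> N \<le> dim V"
    then have lt: "real (dim V) < real N" by simp
    have "\<epsilon> * real (dim V) \<le> (1 / (real N + 1)) * real (dim V)"
      by (rule mult_right_mono) (auto simp: \<epsilon>_def)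
    also have "\<dots> = real (dim V) / (real N + 1)" by simp
    also have "\<dots> < 1" proof -
      have "real (dim V) < real N + 1" using lt by linarith
      then show ?thesis by (simp add: divide_less_eq)
    qed
    finally have "\<epsilon> * real (dim V) < 1" .
    moreover have "(1 + \<epsilon>) * real (dim V) = real (dim V) + \<epsilon> * real (dim V)" by (simp add: algebra_simps)
    ultimately have "real (dim (fol V Z)) < real (dim V) + 1" using V(3) by linarith
    then have dle: "dim (fol V Z) \<le> dim V" by linarith
    have Vsub: "subspace V" using V(1) unfolding fd_subspace_def by auto
    have ffol: "fdim (fol V Z)" using fdim_fol[OF fds_fdim[OF V(1)] fds_fdim[OF Z(1)]] .
    have "V \<subseteq> fol V Z" unfolding fol_def using span_superset by blast
    then have eq: "V = fol V Z" by (rule D3[OF Vsub _ ffol dle])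
    have eq2: "fol V Z \<subseteq> V" by (rule equalityD2[OF eq])
    have inv: "\<forall>w\<in>V. \<forall>g\<in>G. w * g \<in> V"
    proof (intro ballI)
      fix w g assume "w \<in> V" "g \<in> G"
      moreover have "g \<in> Z" using Z(2) \<open>g \<in> G\<close> by (rule subsetD)
      ultimately have "w * g \<in> {v * z | v z. v \<in> V \<and> z \<in> Z}" by blast
      then have "w * g \<in> fol V Z" unfolding fol_def by (rule span_base[OF UnI1])
      then show "w * g \<in> V" using eq2 by (rule rev_subsetD)
    qed
    obtain v where v: "v \<in> V" "v \<noteq> 0" using V(2) Vsub subspace_0 by auto
    have "\<exists>B. finite B \<and> span B = UNIV" by (rule invariant_fd[OF gen nzd Vsub fds_fdim[OF V(1)] v inv])
    then show False using notfd by (rule notE[rotated])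
  qed
  then show ?thesis using V(1,2) le by (intro exI[of _ V]) simp
qed

lemma step_ratio:
  assumes W: "fdim W" and E: "fdim E" and V: "fd_subspace scale V" "V \<noteq> {0}" and r: "r \<in> E"
    and F: "real (dim (fol V E)) \<le> (1 + 1 / (real n + 1)) * real (dim V)"
    and big: "real (dim V) \<ge> (real n + 1) * (2 * (real (dim W) + real (dim E)) + 1)"
    and W'def: "W' = span (W \<union> E \<union> V)"
  shows "1 \<le> real (dim (span ((\<lambda>w. w * r) ` W' \<union> W'))) / real (dim W') \<and>
         real (dim (span ((\<lambda>w. w * r) ` W' \<union> W'))) / real (dim W') \<le> 1 + 2 / (real n + 1)"
proof -
  define A where "A = span (W \<union> E)"
  define X where "X = (\<lambda>w. w * r) ` A"
  define Fo where "Fo = fol V E"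
  define T where "T = span ((\<lambda>w. w * r) ` W' \<union> W')"
  have fV: "fdim V" using fds_fdim[OF V(1)] .
  have fA: "fdim A" unfolding A_def using fdim_span[OF fdim_Un[OF W E]] .
  have fX: "fdim X" unfolding X_def using fdim_right[OF fA] .
  have fF: "fdim Fo" unfolding Fo_def using fdim_fol[OF fV E] .
  have fW': "fdim W'" unfolding W'def using fdim_span[OF fdim_Un[OF fdim_Un[OF W E] fV]] .
  have fT: "fdim T" unfolding T_def using fdim_span[OF fdim_Un[OF fdim_right[OF fW'] fW']] .
  have dA: "dim A \<le> dim W + dim E" unfolding A_def using D4[OF W E] by simp
  have dX: "dim X \<le> dim A" unfolding X_def using D5[OF fA] .
  have WEA: "W \<union> E \<subseteq> A" unfolding A_def by (rule span_superset)
  have VF: "V \<subseteq> Fo" unfolding Fo_def fol_def by (rule order_trans[OF Un_upper2 span_superset])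
  have sub1: "W \<union> E \<union> V \<subseteq> X \<union> A \<union> Fo" using WEA VF by blast
  have sub2: "(\<lambda>w. w * r) ` (W \<union> E \<union> V) \<subseteq> X \<union> A \<union> Fo"
  proof
    fix t assume "t \<in> (\<lambda>w. w * r) ` (W \<union> E \<union> V)"
    then obtain w where w: "w \<in> W \<union> E \<union> V" "t = w * r" by blast
    show "t \<in> X \<union> A \<union> Fo"
    proof (cases "w \<in> V")
      case True
      then have "t \<in> {v * z | v z. v \<in> V \<and> z \<in> E}" using w r by blast
      then have "t \<in> Fo" unfolding Fo_def fol_def by (rule span_base[OF UnI1])
      then show ?thesis by blast
    next
      case False
      then have "w \<in> A" using w WEA by blast
      then show ?thesis using w unfolding X_def by blast
    qed
  qed
  have "(\<lambda>w. w * r) ` W' \<subseteq> span ((\<lambda>w. w * r) ` (W \<union> E \<union> V))"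
  proof
    fix t assume "t \<in> (\<lambda>w. w * r) ` W'"
    then obtain y where y: "y \<in> W'" "t = y * r" by blast
    have "y * r \<in> span ((\<lambda>w. w * r) ` (W \<union> E \<union> V))" using y(1) unfolding W'def by (rule L1r)
    then show "t \<in> span ((\<lambda>w. w * r) ` (W \<union> E \<union> V))" using y(2) by simp
  qed
  also have "\<dots> \<subseteq> span (X \<union> A \<union> Fo)" using span_mono[OF sub2] .
  finally have s3: "(\<lambda>w. w * r) ` W' \<subseteq> span (X \<union> A \<union> Fo)" .
  have s4: "W' \<subseteq> span (X \<union> A \<union> Fo)" unfolding W'def using span_mono[OF sub1] .
  have "T \<subseteq> span (X \<union> A \<union> Fo)" unfolding T_def by (rule span_minimal[OF Un_least[OF s3 s4] subspace_span])
  then have "dim T \<le> dim (span (X \<union> A \<union> Fo))" by (rule D2[OF _ fdim_span[OF fdim_Un[OF fdim_Un[OF fX fA] fF]]])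
  also have "\<dots> = dim (X \<union> A \<union> Fo)" by simp
  also have "\<dots> \<le> dim (X \<union> A) + dim Fo" using D4[OF fdim_Un[OF fX fA] fF] .
  also have "\<dots> \<le> dim X + dim A + dim Fo" using D4[OF fX fA] by simp
  finally have dT: "dim T \<le> dim X + dim A + dim Fo" .
  have "V \<subseteq> W'" unfolding W'def by (rule order_trans[OF Un_upper2 span_superset])
  then have dVW': "dim V \<le> dim W'" by (rule D2[OF _ fW'])
  have "W' \<subseteq> T" unfolding T_def by (rule order_trans[OF Un_upper2 span_superset])
  then have dW'T: "dim W' \<le> dim T" by (rule D2[OF _ fT])
  define a where "a = real (dim W) + real (dim E)"
  define d where "d = real (dim W')"
  define t where "t = real (dim T)"
  have n1: "real n + 1 > 0" by simp
  have r1: "real (dim T) \<le> real (dim X) + real (dim A) + real (dim Fo)" using of_nat_mono[OF dT] by simp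
  have r2: "real (dim X) \<le> real (dim A)" using dX by simp
  have r3: "real (dim A) \<le> real (dim W) + real (dim E)" using of_nat_mono[OF dA] by simp
  have t1: "t \<le> 2 * a + (1 + 1 / (real n + 1)) * real (dim V)"
  proof -
    obtain q where q: "q = (1 + 1 / (real n + 1)) * real (dim V)" by blast
    have "real (dim Fo) \<le> q" using F unfolding q Fo_def .
    then have "t \<le> 2 * a + q" using r1 r2 r3 unfolding t_def a_def by (smt (verit))
    then show ?thesis unfolding q .
  qed
  have "(1 + 1 / (real n + 1)) * real (dim V) \<le> (1 + 1 / (real n + 1)) * d"
    by (rule mult_left_mono) (use dVW' in \<open>auto simp: d_def\<close>)
  then have t2: "t \<le> 2 * a + (1 + 1 / (real n + 1)) * d" using t1 by linarith
  have a0: "a \<ge> 0" unfolding a_def by simp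
  have "(real n + 1) * (2 * a) \<le> (real n + 1) * (2 * a + 1)" using n1 by simp
  then have "(real n + 1) * (2 * a) \<le> d" using big dVW' unfolding a_def d_def by linarith
  then have a2: "2 * a \<le> d / (real n + 1)" using n1 by (simp add: pos_le_divide_eq mult.commute)
  have t3: "t \<le> (1 + 2 / (real n + 1)) * d"
  proof -
    have "t \<le> d / (real n + 1) + (1 + 1 / (real n + 1)) * d" using t2 a2 by linarith
    also have "\<dots> = (1 + 2 / (real n + 1)) * d"
    proof -
      obtain e where e: "e = 1 / (real n + 1)" by blast
      have e1: "d / (real n + 1) = e * d" by (simp add: e)
      have e2: "2 / (real n + 1) = 2 * e" by (simp add: e)
      show ?thesis unfolding e1 e2 e[symmetric] by (simp add: algebra_simps)
    qed
    finally show ?thesis .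
  qed
  have dpos: "d > 0"
  proof -
    have "dim V > 0" using dim_pos[OF V] .
    then show ?thesis using dVW' unfolding d_def by simp
  qed
  have up: "t / d \<le> 1 + 2 / (real n + 1)" using t3 dpos by (simp add: pos_divide_le_eq)
  have lo: "1 \<le> t / d" using dW'T dpos unfolding t_def d_def by simp
  show ?thesis using up lo unfolding t_def d_def T_def by simp
qed

end


context kalg begin

lemma fds_zero: "fd_subspace scale {0}"
proof -
  have "fdim {}" unfolding fdim_def by auto
  then have "fd_subspace scale (span {})" by (rule fdim_fds)
  then show ?thesis by simp
qed

lemma amen_A: assumes "finite B" "span B = UNIV" "(x::'a) \<noteq> 0" shows "amenable_alg scale"
  unfolding amenable_alg_def
proof (intro exI[of _ "\<lambda>_. UNIV"] conjI allI)
  have fU: "fd_subspace scale UNIV" unfolding fd_subspace_def using assms(1,2) by auto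
  then show "fd_subspace scale UNIV" for n :: nat .
  show "incseq (\<lambda>_::nat. UNIV::'a set)" by (simp add: incseq_def)
  show "(\<Union>n::nat. UNIV::'a set) = UNIV" by simp
  fix r
  have "UNIV \<noteq> {0::'a}" using assms(3) by auto
  then have "dim (UNIV::'a set) > 0" using dim_pos[OF fU] by simp
  then show "(\<lambda>n::nat. real (dim (span ((\<lambda>w. w * r) ` UNIV \<union> UNIV))) / real (dim (UNIV::'a set))) \<longlonglongrightarrow> 1"
    by simp
qed

lemma amen_B:
  assumes gen: "gen_subalgebra scale G = UNIV" and finG: "finite G"
    and nzd: "\<forall>x y::'a. x * y = 0 \<longrightarrow> x = 0 \<or> y = 0"
    and notfd: "\<not> (\<exists>B. finite B \<and> span B = UNIV)"
    and Fol: "\<forall>Z \<epsilon>. fd_subspace scale Z \<and> \<epsilon> > 0 \<longrightarrow>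
       (\<exists>V. fd_subspace scale V \<and> V \<noteq> {0} \<and> real (dim (fol V Z)) < (1 + \<epsilon>) * real (dim V))"
  shows "amenable_alg scale"
proof -
  define E where "E n = span (mons G n)" for n
  have fmons: "fdim (mons G n)" for n unfolding fdim_def by (intro exI[of _ "mons G n"] conjI mons_finite[OF finG] span_superset)
  have Efd: "fd_subspace scale (E n)" for n unfolding E_def by (rule fdim_fds[OF fmons])
  have fE: "fdim (E n)" for n using fds_fdim[OF Efd] .
  have GE: "G \<subseteq> E n" for n
  proof -
    have "G \<subseteq> mons G n" using mons_mono[of 0 n G] by simp
    also have "\<dots> \<subseteq> E n" unfolding E_def by (rule span_superset)
    finally show ?thesis .
  qed
  define P where "P W n V \<longleftrightarrow> fd_subspace scale V \<and> V \<noteq> {0} \<and>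
      real (dim (fol V (E n))) \<le> (1 + 1 / (real n + 1)) * real (dim V) \<and>
      dim V \<ge> (n + 1) * (2 * (dim W + dim (E n)) + 1)" for W n V
  have exP: "\<exists>V. P W n V" for W n
  proof -
    have "1 / (real n + 1) > 0" by simp
    then show ?thesis unfolding P_def
      by (rule large_fol[OF gen nzd notfd Fol Efd[of n] GE[of n], where N="(n + 1) * (2 * (dim W + dim (E n)) + 1)"])
  qed
  define Vs where "Vs W n = (SOME V. P W n V)" for W n
  have Vs: "P W n (Vs W n)" for W n unfolding Vs_def by (rule someI_ex[OF exP])
  define Ws where "Ws = rec_nat {0} (\<lambda>n W. span (W \<union> E n \<union> Vs W n))"
  have Ws0: "Ws 0 = {0}" and WsS: "Ws (Suc n) = span (Ws n \<union> E n \<union> Vs (Ws n) n)" for n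
    by (simp_all add: Ws_def)
  have fWs: "fdim (Ws n)" for n
  proof (induction n)
    case 0 show ?case unfolding Ws0 fdim_def by (intro exI[of _ "{}"]) simp
  next
    case (Suc n)
    have "fd_subspace scale (Vs (Ws n) n)" using Vs[of "Ws n" n] unfolding P_def by simp
    then have "fdim (Vs (Ws n) n)" by (rule fds_fdim)
    then show ?case unfolding WsS by (intro fdim_span fdim_Un Suc fE)
  qed
  have fdsWs: "fd_subspace scale (Ws n)" for n
  proof (cases n)
    case 0 then show ?thesis using Ws0 fds_zero by simp
  next
    case (Suc m)
    have "fd_subspace scale (Vs (Ws m) m)" using Vs[of "Ws m" m] unfolding P_def by simp
    then have "fdim (Vs (Ws m) m)" by (rule fds_fdim)
    then have "fdim (Ws m \<union> E m \<union> Vs (Ws m) m)" by (intro fdim_Un fWs fE)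
    then show ?thesis unfolding Suc WsS by (rule fdim_fds)
  qed
  have inc: "incseq Ws"
  proof (rule incseq_SucI)
    fix n
    show "Ws n \<subseteq> Ws (Suc n)" unfolding WsS
      by (rule order_trans[OF order_trans[OF Un_upper1 Un_upper1] span_superset])
  qed
  have EW: "E n \<subseteq> Ws (Suc n)" for n unfolding WsS
    by (rule order_trans[OF order_trans[OF Un_upper2 Un_upper1] span_superset])
  have inE: "\<exists>m. r \<in> E m" for r
  proof -
    have "r \<in> span (\<Union>n. mons G n)" using mons_span_UNIV[OF gen] by simp
    then show ?thesis unfolding E_def by (rule span_chain)
  qed
  have Emono: "m \<le> n \<Longrightarrow> E m \<subseteq> E n" for m n unfolding E_def by (rule span_mono[OF mons_mono])
  have un: "(\<Union>n. Ws n) = UNIV"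
  proof -
    have "r \<in> (\<Union>n. Ws n)" for r
    proof -
      obtain m where "r \<in> E m" using inE by blast
      then have "r \<in> Ws (Suc m)" using EW by (rule rev_subsetD)
      then show ?thesis by (rule UN_I[OF UNIV_I])
    qed
    then show ?thesis by blast
  qed
  have lim: "(\<lambda>n. real (dim (span ((\<lambda>w. w * r) ` Ws n \<union> Ws n))) / real (dim (Ws n))) \<longlonglongrightarrow> 1" for r
  proof -
    define f where "f n = real (dim (span ((\<lambda>w. w * r) ` Ws n \<union> Ws n))) / real (dim (Ws n))" for n
    obtain m where m: "r \<in> E m" using inE by blast
    have bnd: "1 \<le> f (Suc n) \<and> f (Suc n) \<le> 1 + 2 / (real n + 1)" if "n \<ge> m" for n
    proof -
      have rn: "r \<in> E n" using Emono[OF that] m by (rule subsetD)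
      have PV: "P (Ws n) n (Vs (Ws n) n)" by (rule Vs)
      then have V1: "fd_subspace scale (Vs (Ws n) n)" and V2: "Vs (Ws n) n \<noteq> {0}"
        and F: "real (dim (fol (Vs (Ws n) n) (E n))) \<le> (1 + 1 / (real n + 1)) * real (dim (Vs (Ws n) n))"
        and B: "(n + 1) * (2 * (dim (Ws n) + dim (E n)) + 1) \<le> dim (Vs (Ws n) n)"
        unfolding P_def by simp_all
      have "real ((n + 1) * (2 * (dim (Ws n) + dim (E n)) + 1)) \<le> real (dim (Vs (Ws n) n))"
        using B by (rule of_nat_mono)
      then have big: "(real n + 1) * (2 * (real (dim (Ws n)) + real (dim (E n))) + 1) \<le> real (dim (Vs (Ws n) n))"
        by (simp add: algebra_simps)
      show ?thesis unfolding f_def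
        by (rule step_ratio[OF fWs[of n] fE[of n] V1 V2 rn F big WsS[of n]])
    qed
    have "(\<lambda>n. f (Suc n)) \<longlonglongrightarrow> 1"
    proof (rule tendsto_sandwich[of "\<lambda>_. 1" _ sequentially "\<lambda>n. 1 + 2 / (real n + 1)"])
      show "\<forall>\<^sub>F n in sequentially. 1 \<le> f (Suc n)" using bnd by (auto simp: eventually_sequentially)
      show "\<forall>\<^sub>F n in sequentially. f (Suc n) \<le> 1 + 2 / (real n + 1)" using bnd by (auto simp: eventually_sequentially)
      show "((\<lambda>_. 1) \<longlongrightarrow> (1::real)) sequentially" by simp
      have "(\<lambda>n. 2 / real n) \<longlonglongrightarrow> (0::real)" by (rule lim_const_over_n)
      then have "(\<lambda>n. 2 / real (Suc n)) \<longlonglongrightarrow> (0::real)" by (rule LIMSEQ_Suc)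
      then have "(\<lambda>n. 2 / (real n + 1)) \<longlonglongrightarrow> (0::real)" by (simp add: add.commute)
      then have "(\<lambda>n. 1 + 2 / (real n + 1)) \<longlonglongrightarrow> (1 + 0::real)" by (intro tendsto_add tendsto_const)
      then show "((\<lambda>n. 1 + 2 / (real n + 1)) \<longlongrightarrow> (1::real)) sequentially" by simp
    qed
    then have "f \<longlonglongrightarrow> 1" by (rule LIMSEQ_imp_Suc)
    then show ?thesis unfolding f_def .
  qed
  show ?thesis unfolding amenable_alg_def
    by (intro exI[of _ Ws] conjI allI fdsWs inc un lim)
qed

end


theorem lemma2:
  fixes scale :: "'k::field \<Rightarrow> 'a::ring \<Rightarrow> 'a"
  assumes "affine_algebra scale"
    and "no_zero_divisors_alg TYPE('a)"
    and "\<not> amenable_alg scale"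
  shows "\<exists>Z. fd_subspace scale Z \<and>
           (\<forall>V. fd_subspace scale V \<and> V \<noteq> {0} \<longrightarrow>
              real (vector_space.dim scale (subspace_prod scale V Z))
                / real (vector_space.dim scale V) > 2)"
proof -
  have vs: "vector_space scale" and bil: "alg_bilinear scale"
    and G: "\<exists>G. finite G \<and> gen_subalgebra scale G = UNIV"
    using assms(1) unfolding affine_algebra_def K_algebra_def by auto
  interpret kalg scale
  proof (intro kalg.intro kalg_axioms.intro vs)
    fix c x y
    show "scale c (x * y) = scale c x * y" using bil unfolding alg_bilinear_def by blast
    show "scale c (x * y) = x * scale c y" using bil unfolding alg_bilinear_def by blast
  qed
  obtain G where finG: "finite G" and gen: "gen_subalgebra scale G = UNIV" using G by blast
  have nzd: "\<forall>x y::'a. x * y = 0 \<longrightarrow> x = 0 \<or> y = 0"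
    using assms(2) unfolding no_zero_divisors_alg_def by blast
  show ?thesis
  proof (cases "\<exists>x::'a. x \<noteq> 0")
    case False
    then have all0: "\<And>x::'a. x = 0" by blast
    show ?thesis
    proof (intro exI[of _ "{0}"] conjI allI impI fds_zero, elim conjE)
      fix V :: "'a set" assume V: "fd_subspace scale V" "V \<noteq> {0}"
      have "0 \<in> V" using V(1) unfolding fd_subspace_def by (simp add: subspace_0)
      then have "V = {0}" using all0 by auto
      with V(2) show "real (dim (subspace_prod scale V {0})) / real (dim V) > 2" by simp
    qed
  next
    case True
    then obtain x :: 'a where x: "x \<noteq> 0" by blast
    have "\<exists>Z \<epsilon>. fd_subspace scale Z \<and> \<epsilon> > 0 \<and>
        (\<forall>V. fd_subspace scale V \<and> V \<noteq> {0} \<longrightarrow> real (dim (fol V Z)) \<ge> (1 + \<epsilon>) * real (dim V))"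
    proof (rule ccontr)
      assume neg: "\<not> ?thesis"
      have Fol: "\<forall>Z \<epsilon>. fd_subspace scale Z \<and> \<epsilon> > 0 \<longrightarrow>
         (\<exists>V. fd_subspace scale V \<and> V \<noteq> {0} \<and> real (dim (fol V Z)) < (1 + \<epsilon>) * real (dim V))"
      proof (intro allI impI, elim conjE)
        fix Z and \<epsilon> :: real assume "fd_subspace scale Z" "\<epsilon> > 0"
        then have "\<not> (\<forall>V. fd_subspace scale V \<and> V \<noteq> {0} \<longrightarrow> real (dim (fol V Z)) \<ge> (1 + \<epsilon>) * real (dim V))"
          using neg by blast
        then show "\<exists>V. fd_subspace scale V \<and> V \<noteq> {0} \<and> real (dim (fol V Z)) < (1 + \<epsilon>) * real (dim V)"
          by (auto simp: not_le)
      qed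
      have "amenable_alg scale"
      proof (cases "\<exists>B. finite B \<and> span B = UNIV")
        case True
        then obtain B where "finite B" "span B = UNIV" by blast
        then show ?thesis using amen_A x by blast
      next
        case False
        show ?thesis by (rule amen_B[OF gen finG nzd False Fol])
      qed
      then show False using assms(3) by contradiction
    qed
    then obtain Z \<epsilon> where Z: "fd_subspace scale Z" and \<epsilon>: "\<epsilon> > 0"
      and F: "\<forall>V. fd_subspace scale V \<and> V \<noteq> {0} \<longrightarrow> real (dim (fol V Z)) \<ge> (1 + \<epsilon>) * real (dim V)"
      by blast
    have "1 + \<epsilon> > 0" using \<epsilon> by simp
    from amp1[OF nzd x Z this F] obtain Z' where Z': "fd_subspace scale Z'"
      and F': "\<forall>V. fd_subspace scale V \<and> V \<noteq> {0} \<longrightarrow> real (dim (subspace_prod scale V Z')) \<ge> (1 + \<epsilon>) * real (dim V)"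
      by blast
    have "1 + \<epsilon> > 1" using \<epsilon> by simp
    from amp2[OF Z' this F'] show ?thesis .
  qed
qed


end
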